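(* Let $(\mathcal T,d)$ be a finite metric space with $d^\star=\max_{s,t\in\mathcal T}d(s,t)$, let $\ell:\mathbb R_+\to\mathbb R_+$ be non-decreasing, $L(s,t)=\ell(d(s,t))$, $f:\mathcal X^n\to\mathcal T$, $\varepsilon>0$, and $T\ge1$ an integer. Then for every $x\in\mathcal X^n$, the discrete inverse sensitivity mechanism $M_{\mathrm{disc}}$ with parameter $\varepsilon$ satisfies $$\mathbb E[L(M_{\mathrm{disc}}(x),f(x))]\le\ell(\omega_f(x;T))+\frac{2\ell(d^\star)|\mathcal T|}{\varepsilon}e^{-T\varepsilon/2}.$$
   Context: $d_H$ is the Hamming distance on $\mathcal X^n$. The inverse sensitivity is $\mathrm{len}_f(x;t)=\inf\{d_H(x,x'):f(x')=t\}$ ($\inf\emptyset=+\infty$, $e^{-\infty}=0$). The discrete inverse sensitivity mechanism with parameter $\varepsilon$ outputs $t\in\mathcal T$ with probability $e^{-\mathrm{len}_f(x;t)\varepsilon/2}\big/\sum_{s\in\mathcal T}e^{-\mathrm{len}_f(x;s)\varepsilon/2}$. The local modulus of continuity is $\omega_f(x;k)=\sup\{d(f(x),f(x')):x'\in\mathcal X^n,\ d_H(x,x')\le k\}$. *)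

theory Defs
  imports "HOL-Analysis.Analysis" "HOL-Library.Extended_Nat"
begin

text \<open>Data sets in X^n are lists of length n over the type 'x (X = UNIV).\<close>

definition hamming :: "'x list \<Rightarrow> 'x list \<Rightarrow> nat" where
  "hamming xs ys = card {i. i < length xs \<and> xs ! i \<noteq> ys ! i}"

definition finite_metric_on :: "'t set \<Rightarrow> ('t \<Rightarrow> 't \<Rightarrow> real) \<Rightarrow> bool" where
  "finite_metric_on T d \<longleftrightarrow> finite T \<and>
     (\<forall>s\<in>T. \<forall>t\<in>T. d s t \<ge> 0 \<and> (d s t = 0 \<longleftrightarrow> s = t) \<and> d s t = d t s) \<and>
     (\<forall>r\<in>T. \<forall>s\<in>T. \<forall>t\<in>T. d r t \<le> d r s + d s t)"

text \<open>Inverse sensitivity; the infimum over the empty set is \<infinity>.\<close>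
definition inv_sens :: "nat \<Rightarrow> ('x list \<Rightarrow> 't) \<Rightarrow> 'x list \<Rightarrow> 't \<Rightarrow> enat" where
  "inv_sens n f x t = (INF x'\<in>{x'. length x' = n \<and> f x' = t}. enat (hamming x x'))"

definition inv_weight :: "nat \<Rightarrow> ('x list \<Rightarrow> 't) \<Rightarrow> real \<Rightarrow> 'x list \<Rightarrow> 't \<Rightarrow> real" where
  "inv_weight n f eps x t =
     (case inv_sens n f x t of enat k \<Rightarrow> exp (- real k * eps / 2) | \<infinity> \<Rightarrow> 0)"

definition inv_sens_prob ::
  "'t set \<Rightarrow> nat \<Rightarrow> ('x list \<Rightarrow> 't) \<Rightarrow> real \<Rightarrow> 'x list \<Rightarrow> 't \<Rightarrow> real" where
  "inv_sens_prob T n f eps x t =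
     inv_weight n f eps x t / (\<Sum>s\<in>T. inv_weight n f eps x s)"

definition modulus :: "('t \<Rightarrow> 't \<Rightarrow> real) \<Rightarrow> nat \<Rightarrow> ('x list \<Rightarrow> 't) \<Rightarrow> 'x list \<Rightarrow> nat \<Rightarrow> real" where
  "modulus d n f x k =
     (SUP x'\<in>{x'. length x' = n \<and> hamming x x' \<le> k}. d (f x) (f x'))"

definition diam :: "'t set \<Rightarrow> ('t \<Rightarrow> 't \<Rightarrow> real) \<Rightarrow> real" where
  "diam T d = Max {d s t | s t. s \<in> T \<and> t \<in> T}"

end

theory Submission
  imports Defs
begin

lemma inv_sens_enat_ex:
  assumes "inv_sens n f x t = enat k"
  shows "\<exists>x'. length x' = n \<and> f x' = t \<and> hamming x x' = k"
proof -
  let ?S = "(\<lambda>x'. enat (hamming x x')) ` {x'. length x' = n \<and> f x' = t}"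
  have ne: "?S \<noteq> {}"
    using assms unfolding inv_sens_def by (auto simp: Inf_enat_def split: if_splits)
  obtain y where y: "y \<in> ?S" using ne by blast
  have i: "Inf ?S = (LEAST z. z \<in> ?S)" using ne by (simp only: Inf_enat_def if_False)
  have "(LEAST z. z \<in> ?S) \<in> ?S" by (rule LeastI[of "\<lambda>z. z \<in> ?S", OF y])
  with i have "Inf ?S \<in> ?S" by simp
  hence "enat k \<in> ?S" using assms unfolding inv_sens_def by simp
  then show ?thesis by auto
qed

lemma inv_sens_self:
  assumes "length x = n"
  shows "inv_sens n f x (f x) = 0"
proof -
  have "hamming x x = 0" by (simp add: hamming_def)
  hence "inv_sens n f x (f x) \<le> enat 0"
    unfolding inv_sens_def using assms by (metis (mono_tags, lifting) INF_lower mem_Collect_eq)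
  thus ?thesis by (metis le_zero_eq zero_enat_def)
qed

theorem lemmaB1:
  fixes T :: "'t set" and d :: "'t \<Rightarrow> 't \<Rightarrow> real"
    and ell :: "real \<Rightarrow> real" and f :: "'x list \<Rightarrow> 't"
    and n :: nat and eps :: real and K :: nat and x :: "'x list"
  assumes "finite_metric_on T d"
    and "mono_on {0..} ell" and "\<forall>r\<ge>0. ell r \<ge> 0"
    and "\<forall>x'. length x' = n \<longrightarrow> f x' \<in> T"
    and "eps > 0" and "K \<ge> 1"
    and "length x = n"
  shows "(\<Sum>t\<in>T. inv_sens_prob T n f eps x t * ell (d t (f x)))
           \<le> ell (modulus d n f x K)
              + 2 * ell (diam T d) * real (card T) / eps * exp (- real K * eps / 2)"
proof -
  define w where "w = inv_weight n f eps x"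
  define Z where "Z = (\<Sum>s\<in>T. w s)"
  define M where "M = modulus d n f x K"
  define D where "D = diam T d"
  define E where "E = exp (- real (Suc K) * eps / 2)"
  have finT: "finite T" using assms(1) unfolding finite_metric_on_def by auto
  have fxT: "f x \<in> T" using assms(4,7) by auto
  have dnn: "\<And>s t. s \<in> T \<Longrightarrow> t \<in> T \<Longrightarrow> d s t \<ge> 0"
    and dsym: "\<And>s t. s \<in> T \<Longrightarrow> t \<in> T \<Longrightarrow> d s t = d t s"
    using assms(1) unfolding finite_metric_on_def by auto
  have wnn: "\<And>t. w t \<ge> 0" unfolding w_def inv_weight_def by (auto split: enat.splits)
  have w1: "w (f x) = 1" unfolding w_def inv_weight_def inv_sens_self[OF assms(7), of f] zero_enat_def
    by (simp only: enat.case) simp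
  have Z1: "Z \<ge> 1" unfolding Z_def using member_le_sum[of "f x" T w] fxT finT wnn w1 by auto
  have bdd: "bdd_above ((\<lambda>x'. d (f x) (f x')) ` {x'. length x' = n \<and> hamming x x' \<le> K})"
  proof (rule bdd_above_mono)
    show "bdd_above (d (f x) ` T)" using finT by simp
    show "(\<lambda>x'. d (f x) (f x')) ` {x'. length x' = n \<and> hamming x x' \<le> K} \<subseteq> d (f x) ` T"
      using assms(4) by auto
  qed
  have Mup: "d (f x) (f x') \<le> M" if "length x' = n" "hamming x x' \<le> K" for x'
    unfolding M_def modulus_def using that bdd by (auto intro!: cSUP_upper)
  have "hamming x x = 0" by (simp add: hamming_def)
  hence M0: "M \<ge> 0" using Mup[of x] assms(7) dnn fxT by force
  have ellM: "ell M \<ge> 0" using assms(3) M0 by auto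
  have Dup: "d t (f x) \<le> D" if "t \<in> T" for t
    unfolding D_def diam_def
    apply (rule Max_ge)
    using finT that fxT apply (auto intro: finite_subset[of _ "(\<lambda>(s,t). d s t) ` (T \<times> T)"])
    done
  have ellD: "ell (d t (f x)) \<le> ell D" if "t \<in> T" for t
    using assms(2) Dup[OF that] dnn[OF that fxT] by (auto intro: mono_onD)
  have ellD0: "ell D \<ge> 0" using ellD[OF fxT] assms(3) dnn[OF fxT fxT] by force
  have E0: "E \<ge> 0" unfolding E_def by simp
  have termb: "w t * ell (d t (f x)) \<le> w t * ell M + E * ell D" if tT: "t \<in> T" for t
  proof (cases "inv_sens n f x t")
    case (enat k)
    show ?thesis
    proof (cases "k \<le> K")
      case True
      obtain x' where x': "length x' = n" "f x' = t" "hamming x x' = k"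
        using inv_sens_enat_ex[OF enat] by blast
      have "d t (f x) \<le> M" using Mup[of x'] x' True dsym[OF tT fxT] by auto
      hence "ell (d t (f x)) \<le> ell M" using assms(2) dnn[OF tT fxT] M0 by (auto intro: mono_onD)
      hence "w t * ell (d t (f x)) \<le> w t * ell M" using wnn by (simp add: mult_left_mono)
      thus ?thesis using E0 ellD0 by (smt (verit) mult_nonneg_nonneg)
    next
      case False
      have wt: "w t = exp (- real k * eps / 2)" unfolding w_def inv_weight_def using enat by simp
      have kk: "real (Suc K) \<le> real k" using False by simp
      have "real (Suc K) * eps \<le> real k * eps" using mult_right_mono[OF kk] assms(5) by simp
      hence "- real k * eps / 2 \<le> - real (Suc K) * eps / 2" by (simp only: of_nat_Suc)
      hence "w t \<le> E" unfolding wt E_def by (rule exp_mono)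
      hence "w t * ell (d t (f x)) \<le> E * ell D"
        using ellD[OF tT] wnn assms(3) dnn[OF tT fxT] E0 by (meson mult_mono)
      thus ?thesis using wnn[of t] ellM by (smt (verit) mult_nonneg_nonneg)
    qed
  next
    case infinity
    hence "w t = 0" unfolding w_def inv_weight_def by simp
    thus ?thesis using E0 ellD0 by simp
  qed
  have "(\<Sum>t\<in>T. inv_sens_prob T n f eps x t * ell (d t (f x)))
        = (\<Sum>t\<in>T. w t * ell (d t (f x))) / Z"
    unfolding inv_sens_prob_def w_def Z_def by (simp add: sum_divide_distrib)
  also have "\<dots> \<le> (\<Sum>t\<in>T. w t * ell M + E * ell D) / Z"
    using Z1 termb by (intro divide_right_mono sum_mono) auto
  also have "\<dots> = ell M + real (card T) * E * ell D / Z"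
  proof -
    have "(\<Sum>t\<in>T. w t * ell M) = Z * ell M" unfolding Z_def by (simp add: sum_distrib_right)
    hence "(\<Sum>t\<in>T. w t * ell M + E * ell D) = Z * ell M + real (card T) * E * ell D"
      by (simp add: sum.distrib)
    thus ?thesis using Z1 by (simp add: add_divide_distrib)
  qed
  also have "\<dots> \<le> ell M + real (card T) * E * ell D"
  proof -
    have a: "0 \<le> real (card T) * E * ell D" using E0 ellD0 by simp
    have "real (card T) * E * ell D / Z \<le> real (card T) * E * ell D / 1"
      by (rule divide_left_mono[OF Z1 a]) (use Z1 in simp)
    thus ?thesis by simp
  qed
  also have "\<dots> \<le> ell M + real (card T) * (2 / eps * exp (- real K * eps / 2)) * ell D"
  proof -
    have e: "exp (eps/2) \<ge> eps / 2" using exp_ge_add_one_self[of "eps/2"] by linarith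
    have Eeq: "E = exp (- real K * eps / 2) * exp (- (eps/2))"
      unfolding E_def mult_exp_exp by (simp add: field_simps)
    have "exp (- (eps/2)) \<le> 2 / eps"
      using e assms(5) by (simp add: exp_minus field_simps)
    hence "exp (- real K * eps / 2) * exp (- (eps/2)) \<le> exp (- real K * eps / 2) * (2 / eps)"
      by (rule mult_left_mono) simp
    hence Eb: "E \<le> 2 / eps * exp (- real K * eps / 2)" using Eeq by (simp add: mult.commute)
    have "real (card T) * E \<le> real (card T) * (2 / eps * exp (- real K * eps / 2))"
      using Eb by (rule mult_left_mono) simp
    hence "real (card T) * E * ell D \<le> real (card T) * (2 / eps * exp (- real K * eps / 2)) * ell D"
      using ellD0 by (rule mult_right_mono)
    thus ?thesis by simp
  qed
  also have "\<dots> = ell (modulus d n f x K)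
              + 2 * ell (diam T d) * real (card T) / eps * exp (- real K * eps / 2)"
    unfolding M_def D_def by (simp add: mult_ac times_divide_eq_right times_divide_eq_left)
  finally show ?thesis .
qed

end
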